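(* In the Truthful Interval Covering setting with $n$ agents (with $n$ a positive multiple of $6$) and unit-length intervals, the Uniform-Statistic mechanism has approximation ratio at most $5/3$: for every instance $\mathcal{I}$, $\mathbb{E}[\mathrm{SC}(\mathcal{M}(\mathcal{I}))]\le \frac{5}{3}\min_C\mathrm{SC}(C)$.
   Context: There are $n$ agents; agent $i$ has an interval $I_i=[s_i,s_i+1]$ of length $1$; an instance is $\mathcal{I}=(I_1,\dots,I_n)$, with agents indexed so that $s_1\le s_2\le\dots\le s_n$. A unit covering interval $C$ is placed; $\mathrm{cost}_i(C)=1-|I_i\cap C|$ ($|\cdot|$ = length), $\mathrm{SC}(C)=\sum_i\mathrm{cost}_i(C)$, minimum over all unit intervals $C$. The Uniform-Statistic mechanism lets $\ell$ be the $(n/3)$-th agent, $m$ the median agent (the $(n/2)$-th agent) and $r$ the $(2n/3)$-th agent in this order, and places $C$ at $I_\ell$, $I_m$ or $I_r$, each with probability $1/3$. The expectation is over this randomization. *)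

theory Defs
  imports Complex_Main
begin

definition overlap :: "real \<Rightarrow> real \<Rightarrow> real" where
  "overlap a b = max 0 (min (a + 1) (b + 1) - max a b)"

definition agent_cost :: "real \<Rightarrow> real \<Rightarrow> real" where
  "agent_cost si c = 1 - overlap si c"

text \<open>Social cost; agents are indexed 1..n, agent i has interval [s i, s i + 1].\<close>
definition SC :: "nat \<Rightarrow> (nat \<Rightarrow> real) \<Rightarrow> real \<Rightarrow> real" where
  "SC n s c = (\<Sum>i=1..n. agent_cost (s i) c)"

text \<open>Expected social cost of the Uniform-Statistic mechanism: C is placed at
  I_l, I_m, I_r (agents n/3, n/2, 2n/3) each with probability 1/3.\<close>
definition US_expected_SC :: "nat \<Rightarrow> (nat \<Rightarrow> real) \<Rightarrow> real" where
  "US_expected_SC n s =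
     (1/3) * SC n s (s (n div 3)) + (1/3) * SC n s (s (n div 2)) + (1/3) * SC n s (s (2 * n div 3))"

end

theory Submission
  imports Defs
begin
definition D :: "real \<Rightarrow> real \<Rightarrow> real" where "D x y = min 1 \<bar>x - y\<bar>"
lemma D_sym: "D x y = D y x" unfolding D_def by (simp add: abs_minus_commute)
lemma D_nn: "0 \<le> D x y" unfolding D_def by simp
lemma D_tri: "D x z \<le> D x y + D y z" unfolding D_def by (smt (verit))
lemma D_btw1: "x \<le> y \<Longrightarrow> y \<le> z \<Longrightarrow> D y z \<le> D x z" unfolding D_def by (smt (verit))
lemma D_btw2: "x \<le> y \<Longrightarrow> y \<le> z \<Longrightarrow> D x y \<le> D x z" unfolding D_def by (smt (verit))

lemma six_le:
  fixes p1 p2 p3 p4 p5 p6 a b e c :: real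
  assumes o: "p1 \<le> a" "p2 \<le> a" "a \<le> p3" "p3 \<le> b" "b \<le> p4" "p4 \<le> e" "e \<le> p5" "e \<le> p6" and cb: "c \<le> b"
  shows "(D p1 a + D p1 b + D p1 e) + (D p2 a + D p2 b + D p2 e) + (D p3 a + D p3 b + D p3 e)
   + (D p4 a + D p4 b + D p4 e) + (D p5 a + D p5 b + D p5 e) + (D p6 a + D p6 b + D p6 e)
   \<le> 5 * (D p1 c + D p2 c + D p3 c + D p4 c + D p5 c + D p6 c)"
proof (cases "c \<le> a")
  case True
  have q: "D q a \<le> D q c" "D q b \<le> D q c" "D q e \<le> D q c" "D c e \<le> D c q" if "e \<le> q" for q
    using that o True D_btw1[of c a q] D_btw1[of c b q] D_btw1[of c e q] D_btw2[of c e q] D_sym by auto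
  have 4: "D p4 a \<le> D p4 c" "D p4 b \<le> D p4 c" "D p4 e \<le> D b e" "D c b \<le> D c p4"
    using o True D_btw1[of c a p4] D_btw1[of c b p4] D_btw1[of b p4 e] D_btw2[of c b p4] D_sym by auto
  have 3: "D p3 a \<le> D p3 c" "D p3 b \<le> D a b" "D p3 e \<le> D a e" "D c a \<le> D c p3"
    using o True D_btw1[of c a p3] D_btw1[of a p3 b] D_btw1[of a p3 e] D_btw2[of c a p3] D_sym by auto
  have P: "D p x \<le> D p c + D c x" for p x using D_tri by blast
  have abe: "D a b \<le> D c b" "D a e \<le> D c e" "D b e \<le> D c e"
    using o True D_btw1[of c a b] D_btw1[of c a e] D_btw1[of c b e] by auto
  show ?thesis using q[OF o(7)] q[OF o(8)] 4 3 abe P[of p1 a] P[of p1 b] P[of p1 e] P[of p2 a] P[of p2 b] P[of p2 e]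
    D_nn[of p1 c] D_nn[of p2 c] D_sym[of c a] D_sym[of c b] D_sym[of c e] D_sym[of c p3] D_sym[of c p4]
    D_sym[of c p5] D_sym[of c p6] D_nn[of a c] D_nn[of b c] D_nn[of e c] unfolding distrib_left by linarith
next
  case False
  have q: "D q a \<le> D q c + D c a" "D q b \<le> D q c" "D q e \<le> D q c" "D c e \<le> D c q" if "e \<le> q" for q
    using that o False cb D_tri[of q a c] D_btw1[of c b q] D_btw1[of c e q] D_btw2[of c e q] D_sym by auto
  have 4: "D p4 a \<le> D p4 c + D c a" "D p4 b \<le> D p4 c" "D p4 e \<le> D c e" "D c b \<le> D c p4"
    using o False cb D_tri[of p4 a c] D_btw1[of c b p4] D_btw1[of c p4 e] D_btw2[of c b p4] D_sym by auto
  have P: "D p x \<le> D p c + D c x" for p x using D_tri by blast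
  have pp: "D p a \<le> D p c" "D c a \<le> D c p" if "p \<le> a" for p
    using that False D_btw2[of p a c] D_btw1[of p a c] D_sym by auto
  have be: "D c b \<le> D c e" using o cb D_btw2[of c b e] by auto
  show ?thesis using q[OF o(7)] q[OF o(8)] 4 pp[OF o(1)] pp[OF o(2)] P[of p1 b] P[of p1 e] P[of p2 b] P[of p2 e]
    P[of p3 a] P[of p3 b] P[of p3 e] be
    D_nn[of p3 c] D_sym[of c p1] D_sym[of c p2] D_sym[of c p3] D_sym[of c p4]
    D_sym[of c p5] D_sym[of c p6] D_nn[of a c] D_nn[of b c] D_nn[of e c] D_nn[of p1 c] D_nn[of p2 c] unfolding distrib_left by linarith
qed

lemma D_neg: "D (-x) (-y) = D x y" unfolding D_def by (simp add: abs_minus_commute)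

lemma six:
  fixes p1 p2 p3 p4 p5 p6 a b e c :: real
  assumes o: "p1 \<le> a" "p2 \<le> a" "a \<le> p3" "p3 \<le> b" "b \<le> p4" "p4 \<le> e" "e \<le> p5" "e \<le> p6"
  shows "(D p1 a + D p1 b + D p1 e) + (D p2 a + D p2 b + D p2 e) + (D p3 a + D p3 b + D p3 e)
   + (D p4 a + D p4 b + D p4 e) + (D p5 a + D p5 b + D p5 e) + (D p6 a + D p6 b + D p6 e)
   \<le> 5 * (D p1 c + D p2 c + D p3 c + D p4 c + D p5 c + D p6 c)"
proof (cases "c \<le> b")
  case True then show ?thesis using six_le[OF o] by blast
next
  case False
  have "(D (-p5) (-e) + D (-p5) (-b) + D (-p5) (-a)) + (D (-p6) (-e) + D (-p6) (-b) + D (-p6) (-a))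
   + (D (-p4) (-e) + D (-p4) (-b) + D (-p4) (-a)) + (D (-p3) (-e) + D (-p3) (-b) + D (-p3) (-a))
   + (D (-p1) (-e) + D (-p1) (-b) + D (-p1) (-a)) + (D (-p2) (-e) + D (-p2) (-b) + D (-p2) (-a))
   \<le> 5 * (D (-p5) (-c) + D (-p6) (-c) + D (-p4) (-c) + D (-p3) (-c) + D (-p1) (-c) + D (-p2) (-c))"
    by (rule six_le) (use o False in auto)
  then show ?thesis unfolding D_neg distrib_left by linarith
qed

lemma cost_D: "agent_cost x c = D x c"
  unfolding agent_cost_def overlap_def D_def by (simp add: abs_if min_def max_def)

lemma sum_blocks: "(\<Sum>i=1..m*k. h i) = (\<Sum>t<m. \<Sum>j=1..k. h (t*k+j))" for h :: "nat \<Rightarrow> real"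
proof (induction m)
  case 0 then show ?case by simp
next
  case (Suc m)
  have "(\<Sum>i=1..m*k+k. h i) = (\<Sum>i=1..m*k. h i) + (\<Sum>i=m*k+1..m*k+k. h i)"
    by (rule sum.ub_add_nat) simp
  also have "(\<Sum>i=m*k+1..m*k+k. h i) = (\<Sum>j=1..k. h (m*k+j))"
    using sum.shift_bounds_cl_nat_ivl[of h 1 "m*k" k] by (simp add: add.commute)
  finally show ?case using Suc by (simp add: add.commute)
qed

lemma SC_blocks: "SC (6*k) s x = (\<Sum>j=1..k. D (s j) x + D (s (k+j)) x + D (s (2*k+j)) x
   + D (s (3*k+j)) x + D (s (4*k+j)) x + D (s (5*k+j)) x)"
  unfolding SC_def cost_D sum_blocks[where m=6 and k=k and h="\<lambda>i. D (s i) x"]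
  by (simp add: numeral_eq_Suc sum.distrib add.commute add.left_commute)

theorem theorem5:
  fixes n :: nat and s :: "nat \<Rightarrow> real"
  assumes "n > 0" and "6 dvd n"
    and sorted: "\<And>i j. 1 \<le> i \<Longrightarrow> i \<le> j \<Longrightarrow> j \<le> n \<Longrightarrow> s i \<le> s j"
  shows "US_expected_SC n s \<le> 5/3 * (INF c. SC n s c)"
proof -
  obtain k where n: "n = 6*k" using assms(2) by auto
  have k: "k \<ge> 1" using assms(1) n by simp
  have i3: "n div 3 = 2*k" "n div 2 = 3*k" "2*n div 3 = 4*k" using n by auto
  define a where "a = s (2*k)"
  define b where "b = s (3*k)"
  define e where "e = s (4*k)"
  have key: "SC n s a + SC n s b + SC n s e \<le> 5 * SC n s c" for c
  proof -
    have "SC n s a + SC n s b + SC n s e = (\<Sum>j=1..k.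
        (D (s j) a + D (s j) b + D (s j) e) + (D (s (k+j)) a + D (s (k+j)) b + D (s (k+j)) e)
      + (D (s (2*k+j)) a + D (s (2*k+j)) b + D (s (2*k+j)) e) + (D (s (3*k+j)) a + D (s (3*k+j)) b + D (s (3*k+j)) e)
      + (D (s (4*k+j)) a + D (s (4*k+j)) b + D (s (4*k+j)) e) + (D (s (5*k+j)) a + D (s (5*k+j)) b + D (s (5*k+j)) e))"
      unfolding n SC_blocks by (simp add: sum.distrib[symmetric] algebra_simps)
    also have "\<dots> \<le> (\<Sum>j=1..k. 5 * (D (s j) c + D (s (k+j)) c + D (s (2*k+j)) c
   + D (s (3*k+j)) c + D (s (4*k+j)) c + D (s (5*k+j)) c))"
    proof (rule sum_mono)
      fix j assume j: "j \<in> {1..k}"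
      have o: "s j \<le> a" "s (k+j) \<le> a" "a \<le> s (2*k+j)" "s (2*k+j) \<le> b" "b \<le> s (3*k+j)"
        "s (3*k+j) \<le> e" "e \<le> s (4*k+j)" "e \<le> s (5*k+j)"
        unfolding a_def b_def e_def using j k by (auto intro!: sorted simp: n)
      show "(D (s j) a + D (s j) b + D (s j) e) + (D (s (k+j)) a + D (s (k+j)) b + D (s (k+j)) e)
      + (D (s (2*k+j)) a + D (s (2*k+j)) b + D (s (2*k+j)) e) + (D (s (3*k+j)) a + D (s (3*k+j)) b + D (s (3*k+j)) e)
      + (D (s (4*k+j)) a + D (s (4*k+j)) b + D (s (4*k+j)) e) + (D (s (5*k+j)) a + D (s (5*k+j)) b + D (s (5*k+j)) e)
        \<le> 5 * (D (s j) c + D (s (k+j)) c + D (s (2*k+j)) c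
   + D (s (3*k+j)) c + D (s (4*k+j)) c + D (s (5*k+j)) c)"
        by (rule six[OF o])
    qed
    also have "\<dots> = 5 * SC n s c"
      unfolding n SC_blocks by (simp add: sum_distrib_left)
    finally show ?thesis .
  qed
  have "US_expected_SC n s * (3/5) \<le> (INF c. SC n s c)"
  proof (rule cINF_greatest)
    show "UNIV \<noteq> {}" by simp
    fix c show "US_expected_SC n s * (3/5) \<le> SC n s c"
      using key[of c] unfolding US_expected_SC_def i3 a_def[symmetric] b_def[symmetric] e_def[symmetric]
      by simp
  qed
  then show ?thesis by simp
qed

end
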